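(* Let $G$ be a totally disconnected, locally compact group, $g\in G$ and $U$ a compact open subgroup of $G$ such that the indices $|U:U\cap g^{-1}Ug|$ and $|U:U\cap gUg^{-1}|$ are coprime. Then $U$ is tidy for $g$ and $s(g)=|U:U\cap g^{-1}Ug|$.
   Context: The scale function of a totally disconnected, locally compact group $G$ is $s(g)=\min\{|U:U\cap g^{-1}Ug| : U \text{ a compact open subgroup of } G\}$. A compact open subgroup $U$ is tidy for $g$ if this minimum is attained at $U$. *)

theory Defs
  imports "HOL-Analysis.Analysis" "HOL-Algebra.Coset" "HOL-Computational_Algebra.Primes"
begin

definition topological_group :: "('a, 'b) monoid_scheme \<Rightarrow> 'a topology \<Rightarrow> bool" where
  "topological_group G T \<longleftrightarrow> group G \<and> topspace T = carrier G \<and>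
     continuous_map (prod_topology T T) T (\<lambda>p. fst p \<otimes>\<^bsub>G\<^esub> snd p) \<and>
     continuous_map T T (\<lambda>x. inv\<^bsub>G\<^esub> x)"

definition totally_disconnected_space :: "'a topology \<Rightarrow> bool" where
  "totally_disconnected_space T \<longleftrightarrow>
     (\<forall>S. connectedin T S \<longrightarrow> (\<exists>x. S \<subseteq> {x}))"

definition tdlc_group :: "('a, 'b) monoid_scheme \<Rightarrow> 'a topology \<Rightarrow> bool" where
  "tdlc_group G T \<longleftrightarrow> topological_group G T \<and> totally_disconnected_space T \<and>
     locally_compact_space T"

definition compact_open_subgroup :: "('a, 'b) monoid_scheme \<Rightarrow> 'a topology \<Rightarrow> 'a set \<Rightarrow> bool" where
  "compact_open_subgroup G T U \<longleftrightarrow> subgroup U G \<and> openin T U \<and> compactin T U"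

definition subgroup_index :: "('a, 'b) monoid_scheme \<Rightarrow> 'a set \<Rightarrow> 'a set \<Rightarrow> nat" where
  "subgroup_index G H K = card ((\<lambda>x. K #>\<^bsub>G\<^esub> x) ` H)"

definition conj_set :: "('a, 'b) monoid_scheme \<Rightarrow> 'a \<Rightarrow> 'a set \<Rightarrow> 'a set" where
  "conj_set G x U = (x <#\<^bsub>G\<^esub> U) #>\<^bsub>G\<^esub> (inv\<^bsub>G\<^esub> x)"

definition scale :: "('a, 'b) monoid_scheme \<Rightarrow> 'a topology \<Rightarrow> 'a \<Rightarrow> nat" where
  "scale G T g = (LEAST n. \<exists>U. compact_open_subgroup G T U \<and>
       n = subgroup_index G U (U \<inter> conj_set G (inv\<^bsub>G\<^esub> g) U))"

definition tidy :: "('a, 'b) monoid_scheme \<Rightarrow> 'a topology \<Rightarrow> 'a \<Rightarrow> 'a set \<Rightarrow> bool" where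
  "tidy G T g U \<longleftrightarrow> compact_open_subgroup G T U \<and>
     subgroup_index G U (U \<inter> conj_set G (inv\<^bsub>G\<^esub> g) U) = scale G T g"

end

theory Submission
  imports Defs
begin

context group begin

lemma rcos_mono: "C \<subseteq> B \<Longrightarrow> C #> y \<subseteq> B #> y"
  by (auto simp: r_coset_def)

lemma coset_subset_sub: "subgroup A G \<Longrightarrow> subgroup B G \<Longrightarrow> B \<subseteq> A \<Longrightarrow> x \<in> A \<Longrightarrow> B #> x \<subseteq> A"
  by (auto simp: r_coset_def subgroup.m_closed subsetD)

lemma tower:
  assumes A: "subgroup A G" and B: "subgroup B G" and C: "subgroup C G"
    and CB: "C \<subseteq> B" and BA: "B \<subseteq> A"
    and fin: "finite ((\<lambda>x. C #> x) ` A)"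
  shows "card ((\<lambda>x. C #> x) ` A) = card ((\<lambda>x. B #> x) ` A) * card ((\<lambda>x. C #> x) ` B)
       \<and> finite ((\<lambda>x. B #> x) ` A) \<and> finite ((\<lambda>x. C #> x) ` B)"
proof -
  define cA where "cA = (\<lambda>x. C #> x) ` A"
  define bA where "bA = (\<lambda>x. B #> x) ` A"
  define cB where "cB = (\<lambda>x. C #> x) ` B"
  define fib where "fib S = (\<lambda>y. C #> y) ` S" for S
  have Ac: "A \<subseteq> carrier G" using A subgroup.subset by blast
  have Bc: "B \<subseteq> carrier G" using B subgroup.subset by blast
  have Cc: "C \<subseteq> carrier G" using C subgroup.subset by blast
  have fibx: "fib (B #> x) = (\<lambda>T. T #> x) ` cB" if x: "x \<in> A" for x
  proof -
    have xc: "x \<in> carrier G" using x Ac by blast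
    have "fib (B #> x) = (\<lambda>b. C #> (b \<otimes> x)) ` B"
      unfolding fib_def r_coset_def[of G B x] by auto
    also have "\<dots> = (\<lambda>b. (C #> b) #> x) ` B"
      using coset_mult_assoc[OF Cc _ xc] Bc by (intro image_cong) auto
    also have "\<dots> = (\<lambda>T. T #> x) ` cB" unfolding cB_def by auto
    finally show ?thesis .
  qed
  have injx: "inj_on (\<lambda>T. T #> x) cB" if x: "x \<in> A" for x
  proof (rule inj_onI)
    fix S T assume S: "S \<in> cB" and T: "T \<in> cB" and eq: "S #> x = T #> x"
    have xc: "x \<in> carrier G" using x Ac by blast
    have Sc: "S \<subseteq> carrier G" using S Bc Cc r_coset_subset_G unfolding cB_def by blast
    have Tc: "T \<subseteq> carrier G" using T Bc Cc r_coset_subset_G unfolding cB_def by blast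
    have "S = (S #> x) #> inv x"
      using coset_mult_assoc[OF Sc xc inv_closed[OF xc]] xc Sc coset_mult_one by simp
    also have "\<dots> = (T #> x) #> inv x" using eq by simp
    also have "\<dots> = T"
      using coset_mult_assoc[OF Tc xc inv_closed[OF xc]] xc Tc coset_mult_one by simp
    finally show "S = T" .
  qed
  have union: "\<Union> (fib ` bA) = cA"
  proof
    show "\<Union> (fib ` bA) \<subseteq> cA"
      unfolding fib_def bA_def cA_def using coset_subset_sub[OF A B BA] by blast
    show "cA \<subseteq> \<Union> (fib ` bA)"
    proof
      fix T assume "T \<in> cA"
      then obtain y where y: "y \<in> A" "T = C #> y" unfolding cA_def by blast
      have "y \<in> B #> y" using rcos_self[OF _ B] y Ac by blast
      then show "T \<in> \<Union> (fib ` bA)" unfolding fib_def bA_def using y by blast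
    qed
  qed
  have unfib: "\<Union> (fib S) = S" if Sb: "S \<in> bA" for S
  proof -
    obtain x where x: "x \<in> A" "S = B #> x" using Sb unfolding bA_def by blast
    show ?thesis
    proof
      show "\<Union> (fib S) \<subseteq> S"
      proof
        fix z assume "z \<in> \<Union> (fib S)"
        then obtain y where y: "y \<in> S" "z \<in> C #> y" unfolding fib_def by blast
        have "z \<in> B #> y" using y rcos_mono[OF CB] by blast
        moreover have "B #> y = S" using repr_independence[of y B x] x y Ac B by auto
        ultimately show "z \<in> S" by simp
      qed
      show "S \<subseteq> \<Union> (fib S)"
      proof
        fix y assume y: "y \<in> S"
        have "y \<in> carrier G" using y x coset_subset_sub[OF A B BA] Ac by blast
        then have "y \<in> C #> y" using rcos_self[OF _ C] by blast
        then show "y \<in> \<Union> (fib S)" using y unfolding fib_def by blast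
      qed
    qed
  qed
  have injfib: "inj_on fib bA"
    by (rule inj_onI) (metis unfib)
  have finF: "finite (fib ` bA)"
    using fin union unfolding cA_def by (metis finite_UnionD)
  have finbA: "finite bA" using finF injfib finite_image_iff by blast
  have one: "\<one> \<in> A" using A subgroup.one_closed by blast
  have fibsub: "fib (B #> \<one>) \<subseteq> cA" using union one unfolding bA_def by blast
  have fincB: "finite cB"
  proof -
    have "finite (fib (B #> \<one>))" using fibsub fin unfolding cA_def by (rule finite_subset)
    then show ?thesis using fibx[OF one] injx[OF one] finite_image_iff by metis
  qed
  have cards: "\<forall>c\<in>fib ` bA. card c = card cB"
  proof
    fix c assume "c \<in> fib ` bA"
    then obtain x where x: "x \<in> A" "c = fib (B #> x)" unfolding bA_def by blast
    show "card c = card cB" using x fibx injx card_image by metis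
  qed
  have disj: "\<forall>c1\<in>fib ` bA. \<forall>c2\<in>fib ` bA. c1 \<noteq> c2 \<longrightarrow> c1 \<inter> c2 = {}"
  proof (intro ballI impI)
    fix c1 c2 assume c1: "c1 \<in> fib ` bA" and c2: "c2 \<in> fib ` bA" and ne: "c1 \<noteq> c2"
    obtain x1 where x1: "x1 \<in> A" "c1 = fib (B #> x1)" using c1 unfolding bA_def by blast
    obtain x2 where x2: "x2 \<in> A" "c2 = fib (B #> x2)" using c2 unfolding bA_def by blast
    show "c1 \<inter> c2 = {}"
    proof (rule ccontr)
      assume "c1 \<inter> c2 \<noteq> {}"
      then obtain y1 y2 where y: "y1 \<in> B #> x1" "y2 \<in> B #> x2" "C #> y1 = C #> y2"
        using x1 x2 unfolding fib_def by blast
      have y1c: "y1 \<in> carrier G" using y x1 coset_subset_sub[OF A B BA] Ac by blast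
      have y2c: "y2 \<in> carrier G" using y x2 coset_subset_sub[OF A B BA] Ac by blast
      have "y2 \<in> C #> y1" using y rcos_self[OF y2c C] by simp
      then have "y2 \<in> B #> y1" using rcos_mono[OF CB] by blast
      then have "B #> y1 = B #> y2" using repr_independence[OF _ y1c B] by blast
      moreover have "B #> x1 = B #> y1" using repr_independence[OF y(1) _ B] x1 Ac by blast
      moreover have "B #> x2 = B #> y2" using repr_independence[OF y(2) _ B] x2 Ac by blast
      ultimately show False using ne x1 x2 by simp
    qed
  qed
  have "card cB * card (fib ` bA) = card (\<Union> (fib ` bA))"
  proof (rule card_partition[OF finF])
    show "finite (\<Union> (fib ` bA))" using fin union unfolding cA_def by simp
    show "\<And>c. c \<in> fib ` bA \<Longrightarrow> card c = card cB" using cards by blast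
    show "\<And>c1 c2. c1 \<in> fib ` bA \<Longrightarrow> c2 \<in> fib ` bA \<Longrightarrow> c1 \<noteq> c2 \<Longrightarrow> c1 \<inter> c2 = {}"
      using disj by blast
  qed
  then have "card cA = card cB * card bA" using union card_image[OF injfib] by simp
  then show ?thesis using finbA fincB unfolding cA_def bA_def cB_def by simp
qed

end

context group begin

lemma inv_cancel_l: "h \<in> carrier G \<Longrightarrow> z \<in> carrier G \<Longrightarrow> inv h \<otimes> (h \<otimes> z) = z"
  by (simp add: m_assoc[symmetric])

lemma conj_mult_el: "h \<in> carrier G \<Longrightarrow> x \<in> carrier G \<Longrightarrow> y \<in> carrier G \<Longrightarrow>
  (h \<otimes> x \<otimes> inv h) \<otimes> (h \<otimes> y \<otimes> inv h) = h \<otimes> (x \<otimes> y) \<otimes> inv h"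
  by (simp add: m_assoc inv_cancel_l)

lemma conj_inv_el: "h \<in> carrier G \<Longrightarrow> x \<in> carrier G \<Longrightarrow>
  inv (h \<otimes> x \<otimes> inv h) = h \<otimes> inv x \<otimes> inv h"
  by (simp add: inv_mult_group m_assoc)

lemma conj_eq: "conj_set G h X = (\<lambda>x. h \<otimes> x \<otimes> inv h) ` X"
  by (auto simp: conj_set_def l_coset_def r_coset_def)

lemma conj_inv_conj:
  assumes h: "h \<in> carrier G" and X: "X \<subseteq> carrier G"
  shows "conj_set G (inv h) (conj_set G h X) = X"
proof -
  have "\<And>x. x \<in> carrier G \<Longrightarrow> inv h \<otimes> (h \<otimes> x \<otimes> inv h) \<otimes> inv (inv h) = x"
    using h by (simp add: m_assoc) (simp add: m_assoc[symmetric])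
  then have "(\<lambda>x. inv h \<otimes> (h \<otimes> x \<otimes> inv h) \<otimes> inv (inv h)) ` X = (\<lambda>x. x) ` X"
    using X by (intro image_cong) auto
  then show ?thesis unfolding conj_eq image_image by simp
qed

lemma conj_conj_inv:
  assumes h: "h \<in> carrier G" and X: "X \<subseteq> carrier G"
  shows "conj_set G h (conj_set G (inv h) X) = X"
  using conj_inv_conj[of "inv h" X] h X by simp

lemma conj_subset: "h \<in> carrier G \<Longrightarrow> X \<subseteq> carrier G \<Longrightarrow> conj_set G h X \<subseteq> carrier G"
  unfolding conj_eq by auto

lemma conj_inj:
  assumes h: "h \<in> carrier G"
  shows "inj_on (conj_set G h) (Pow (carrier G))"
  by (rule inj_onI) (metis PowD conj_inv_conj h)

lemma conj_Int:
  assumes h: "h \<in> carrier G" and X: "X \<subseteq> carrier G" and Y: "Y \<subseteq> carrier G"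
  shows "conj_set G h (X \<inter> Y) = conj_set G h X \<inter> conj_set G h Y"
proof -
  have "inj_on (\<lambda>x. h \<otimes> x \<otimes> inv h) (carrier G)"
    by (rule inj_onI) (use h in simp)
  then show ?thesis unfolding conj_eq using X Y by (simp add: inj_on_image_Int)
qed

lemma conj_subgroup:
  assumes h: "h \<in> carrier G" and H: "subgroup H G"
  shows "subgroup (conj_set G h H) G"
proof -
  have Hc: "H \<subseteq> carrier G" using H subgroup.subset by blast
  show ?thesis
  proof (rule subgroupI)
    show "conj_set G h H \<subseteq> carrier G" using conj_subset h Hc by blast
    have "\<one> \<in> H" using H subgroup.one_closed by blast
    then show "conj_set G h H \<noteq> {}" unfolding conj_eq by blast
  next
    fix a assume "a \<in> conj_set G h H"
    then have "a \<in> (\<lambda>x. h \<otimes> x \<otimes> inv h) ` H" by (simp only: conj_eq)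
    then obtain x where x: "a = h \<otimes> x \<otimes> inv h" "x \<in> H" by (rule imageE)
    have xc: "x \<in> carrier G" using subgroup.mem_carrier[OF H x(2)] .
    have "inv a = h \<otimes> inv x \<otimes> inv h" unfolding x(1) by (rule conj_inv_el[OF h xc])
    moreover have "inv x \<in> H" using subgroup.m_inv_closed[OF H x(2)] .
    ultimately show "inv a \<in> conj_set G h H" unfolding conj_eq by (rule image_eqI)
  next
    fix a b assume ab: "a \<in> conj_set G h H" "b \<in> conj_set G h H"
    from ab(1) have "a \<in> (\<lambda>x. h \<otimes> x \<otimes> inv h) ` H" by (simp only: conj_eq)
    then obtain x where x: "a = h \<otimes> x \<otimes> inv h" "x \<in> H" by (rule imageE)
    from ab(2) have "b \<in> (\<lambda>x. h \<otimes> x \<otimes> inv h) ` H" by (simp only: conj_eq)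
    then obtain y where y: "b = h \<otimes> y \<otimes> inv h" "y \<in> H" by (rule imageE)
    have xc: "x \<in> carrier G" using subgroup.mem_carrier[OF H x(2)] .
    have yc: "y \<in> carrier G" using subgroup.mem_carrier[OF H y(2)] .
    have "a \<otimes> b = h \<otimes> (x \<otimes> y) \<otimes> inv h" unfolding x(1) y(1) by (rule conj_mult_el[OF h xc yc])
    moreover have "x \<otimes> y \<in> H" using subgroup.m_closed[OF H x(2) y(2)] .
    ultimately show "a \<otimes> b \<in> conj_set G h H" unfolding conj_eq by (rule image_eqI)
  qed
qed

lemma conj_coset:
  assumes h: "h \<in> carrier G" and B: "B \<subseteq> carrier G" and x: "x \<in> carrier G"
  shows "conj_set G h (B #> x) = conj_set G h B #> (h \<otimes> x \<otimes> inv h)"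
proof -
  have e: "h \<otimes> (b \<otimes> x) \<otimes> inv h = h \<otimes> b \<otimes> inv h \<otimes> (h \<otimes> x \<otimes> inv h)" if b: "b \<in> B" for b
  proof -
    have bc: "b \<in> carrier G" using b B by blast
    show ?thesis using conj_mult_el[OF h bc x] by simp
  qed
  have "conj_set G h (B #> x) = (\<lambda>b. h \<otimes> (b \<otimes> x) \<otimes> inv h) ` B"
    unfolding conj_eq r_coset_def by auto
  also have "\<dots> = (\<lambda>b. h \<otimes> b \<otimes> inv h \<otimes> (h \<otimes> x \<otimes> inv h)) ` B"
    using e by (rule image_cong[OF refl])
  also have "\<dots> = conj_set G h B #> (h \<otimes> x \<otimes> inv h)"
    unfolding conj_eq r_coset_def by auto
  finally show ?thesis .
qed

lemma conj_cosets:
  assumes h: "h \<in> carrier G" and B: "B \<subseteq> carrier G" and A: "A \<subseteq> carrier G"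
  shows "(\<lambda>y. conj_set G h B #> y) ` conj_set G h A = conj_set G h ` ((\<lambda>x. B #> x) ` A)"
proof -
  have "(\<lambda>y. conj_set G h B #> y) ` conj_set G h A = (\<lambda>x. conj_set G h B #> (h \<otimes> x \<otimes> inv h)) ` A"
    unfolding conj_eq[of h A] image_image ..
  also have "\<dots> = (\<lambda>x. conj_set G h (B #> x)) ` A"
    using conj_coset[OF h B] A by (intro image_cong) auto
  finally show ?thesis by (simp add: image_image)
qed

lemma conj_index:
  assumes h: "h \<in> carrier G" and B: "B \<subseteq> carrier G" and A: "A \<subseteq> carrier G"
  shows "card ((\<lambda>y. conj_set G h B #> y) ` conj_set G h A) = card ((\<lambda>x. B #> x) ` A)
    \<and> (finite ((\<lambda>y. conj_set G h B #> y) ` conj_set G h A) \<longleftrightarrow> finite ((\<lambda>x. B #> x) ` A))"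
proof -
  have sub: "(\<lambda>x. B #> x) ` A \<subseteq> Pow (carrier G)" using B A r_coset_subset_G by blast
  have inj: "inj_on (conj_set G h) ((\<lambda>x. B #> x) ` A)"
    using inj_on_subset[OF conj_inj[OF h] sub] .
  show ?thesis unfolding conj_cosets[OF h B A] using card_image[OF inj] finite_image_iff[OF inj] by simp
qed

end

lemma (in group) conj_conj_el:
  "h \<in> carrier G \<Longrightarrow> x \<in> carrier G \<Longrightarrow> inv h \<otimes> (h \<otimes> x \<otimes> inv h) \<otimes> inv (inv h) = x"
  by (simp add: m_assoc) (simp add: m_assoc[symmetric])

lemma (in group) coset_mem_iff:
  assumes D: "D \<subseteq> carrier G" and x: "x \<in> carrier G"
  shows "D #> x = {y \<in> carrier G. y \<otimes> inv x \<in> D}"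
proof
  show "D #> x \<subseteq> {y \<in> carrier G. y \<otimes> inv x \<in> D}"
  proof
    fix y assume "y \<in> D #> x"
    then obtain d where d: "d \<in> D" "y = d \<otimes> x" unfolding r_coset_def by blast
    have dc: "d \<in> carrier G" using d(1) D by blast
    have "y \<otimes> inv x = d" unfolding d(2) using dc x by (simp add: m_assoc)
    then show "y \<in> {y \<in> carrier G. y \<otimes> inv x \<in> D}" using d dc x by simp
  qed
  show "{y \<in> carrier G. y \<otimes> inv x \<in> D} \<subseteq> D #> x"
  proof
    fix y assume y: "y \<in> {y \<in> carrier G. y \<otimes> inv x \<in> D}"
    have yc: "y \<in> carrier G" using y by simp
    have "y = (y \<otimes> inv x) \<otimes> x" using yc x by (simp add: m_assoc)
    then show "y \<in> D #> x" using y unfolding r_coset_def by blast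
  qed
qed

lemma tg_group: "topological_group G T \<Longrightarrow> group G"
  unfolding topological_group_def by blast

lemma tg_top: "topological_group G T \<Longrightarrow> topspace T = carrier G"
  unfolding topological_group_def by blast

lemma tg_rmult:
  assumes tg: "topological_group G T" and c: "c \<in> carrier G"
  shows "continuous_map T T (\<lambda>y. y \<otimes>\<^bsub>G\<^esub> c)"
proof -
  have m: "continuous_map (prod_topology T T) T (\<lambda>p. fst p \<otimes>\<^bsub>G\<^esub> snd p)"
    using tg unfolding topological_group_def by blast
  have p: "continuous_map T (prod_topology T T) (\<lambda>y. (y, c))"
    by (intro continuous_map_pairedI) (use c tg_top[OF tg] in \<open>auto simp: continuous_map_id[unfolded id_def]\<close>)
  show ?thesis using continuous_map_compose[OF p m] by (simp add: o_def)
qed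

lemma tg_lmult:
  assumes tg: "topological_group G T" and c: "c \<in> carrier G"
  shows "continuous_map T T (\<lambda>y. c \<otimes>\<^bsub>G\<^esub> y)"
proof -
  have m: "continuous_map (prod_topology T T) T (\<lambda>p. fst p \<otimes>\<^bsub>G\<^esub> snd p)"
    using tg unfolding topological_group_def by blast
  have p: "continuous_map T (prod_topology T T) (\<lambda>y. (c, y))"
    by (intro continuous_map_pairedI) (use c tg_top[OF tg] in \<open>auto simp: continuous_map_id[unfolded id_def]\<close>)
  show ?thesis using continuous_map_compose[OF p m] by (simp add: o_def)
qed

lemma (in group) tg_conj_cont:
  assumes tg: "topological_group G T" and h: "h \<in> carrier G"
  shows "continuous_map T T (\<lambda>y. h \<otimes>\<^bsub>G\<^esub> y \<otimes>\<^bsub>G\<^esub> inv\<^bsub>G\<^esub> h)"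
proof -
  show ?thesis using continuous_map_compose[OF tg_lmult[OF tg h] tg_rmult[OF tg inv_closed[OF h]]]
    by (simp add: o_def)
qed

lemma (in group) tg_open_coset:
  assumes tg: "topological_group G T" and D: "openin T D" and x: "x \<in> carrier G"
  shows "openin T (D #>\<^bsub>G\<^esub> x)"
proof -
  have Dc: "D \<subseteq> carrier G" using openin_subset[OF D] tg_top[OF tg] by simp
  have "openin T {y \<in> topspace T. y \<otimes> inv x \<in> D}"
    by (rule openin_continuous_map_preimage[OF tg_rmult[OF tg inv_closed[OF x]] D])
  then show ?thesis using coset_mem_iff[OF Dc x] tg_top[OF tg] by simp
qed

lemma (in group) tg_open_conj:
  assumes tg: "topological_group G T" and X: "openin T X" and h: "h \<in> carrier G"
  shows "openin T (conj_set G h X)"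
proof -
  have Xc: "X \<subseteq> carrier G" using openin_subset[OF X] tg_top[OF tg] by simp
  have ih: "inv h \<in> carrier G" using h by simp
  have o: "openin T {y \<in> topspace T. inv h \<otimes> y \<otimes> inv (inv h) \<in> X}"
    by (rule openin_continuous_map_preimage[OF tg_conj_cont[OF tg ih] X])
  have "conj_set G h X = {y \<in> carrier G. inv h \<otimes> y \<otimes> inv (inv h) \<in> X}"
  proof
    show "conj_set G h X \<subseteq> {y \<in> carrier G. inv h \<otimes> y \<otimes> inv (inv h) \<in> X}"
    proof
      fix y assume "y \<in> conj_set G h X"
      then have "y \<in> (\<lambda>x. h \<otimes> x \<otimes> inv h) ` X" by (simp only: conj_eq)
      then obtain x where x: "y = h \<otimes> x \<otimes> inv h" "x \<in> X" by (rule imageE)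
      have xc: "x \<in> carrier G" using x(2) Xc by blast
      have "inv h \<otimes> y \<otimes> inv (inv h) = x" unfolding x(1) by (rule conj_conj_el[OF h xc])
      moreover have "y \<in> carrier G" unfolding x(1) using h xc by simp
      ultimately show "y \<in> {y \<in> carrier G. inv h \<otimes> y \<otimes> inv (inv h) \<in> X}" using x(2) by simp
    qed
    show "{y \<in> carrier G. inv h \<otimes> y \<otimes> inv (inv h) \<in> X} \<subseteq> conj_set G h X"
    proof
      fix y assume y: "y \<in> {y \<in> carrier G. inv h \<otimes> y \<otimes> inv (inv h) \<in> X}"
      have yc: "y \<in> carrier G" using y by simp
      have "h \<otimes> (inv h \<otimes> y \<otimes> inv (inv h)) \<otimes> inv h = y"
        using conj_conj_el[OF ih yc] h by simp
      then have "y = h \<otimes> (inv h \<otimes> y \<otimes> inv (inv h)) \<otimes> inv h" by simp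
      moreover have "inv h \<otimes> y \<otimes> inv (inv h) \<in> X" using y by simp
      ultimately have "y \<in> (\<lambda>x. h \<otimes> x \<otimes> inv h) ` X" by (rule image_eqI)
      then show "y \<in> conj_set G h X" by (simp only: conj_eq)
    qed
  qed
  then show ?thesis using o tg_top[OF tg] by simp
qed

lemma (in group) tg_compact_conj:
  assumes tg: "topological_group G T" and X: "compactin T X" and h: "h \<in> carrier G"
  shows "compactin T (conj_set G h X)"
proof -
  show ?thesis unfolding conj_eq by (rule image_compactin[OF X tg_conj_cont[OF tg h]])
qed

lemma (in group) tg_finite_index:
  assumes tg: "topological_group G T" and X: "compactin T X" and XS: "subgroup X G"
    and D: "openin T D" and DS: "subgroup D G" and DX: "D \<subseteq> X"
  shows "finite ((\<lambda>x. D #>\<^bsub>G\<^esub> x) ` X)"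
proof -
  have Xc: "X \<subseteq> carrier G" using XS subgroup.subset by blast
  let ?U = "(\<lambda>x. D #> x) ` X"
  have op: "\<forall>V\<in>?U. openin T V" using tg_open_coset[OF tg D] Xc by blast
  have cov: "X \<subseteq> \<Union>?U"
  proof
    fix x assume x: "x \<in> X"
    then have "x \<in> D #> x" using rcos_self[OF _ DS] Xc by blast
    then show "x \<in> \<Union>?U" using x by blast
  qed
  obtain F where F: "finite F" "F \<subseteq> ?U" "X \<subseteq> \<Union>F"
    using X op cov unfolding compactin_def by meson
  have "?U \<subseteq> F"
  proof
    fix V assume "V \<in> ?U"
    then obtain x where x: "x \<in> X" "V = D #> x" by blast
    obtain S where S: "S \<in> F" "x \<in> S" using F(3) x(1) by blast
    obtain x' where x': "x' \<in> X" "S = D #> x'" using S(1) F(2) by blast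
    have "D #> x' = D #> x" using repr_independence[of x D x'] S(2) x' Xc DS by blast
    then show "V \<in> F" using S x x' by simp
  qed
  then show ?thesis using F(1) finite_subset by blast
qed

lemma (in group) idx_tower:
  assumes "subgroup A G" "subgroup B G" "subgroup C G" "C \<subseteq> B" "B \<subseteq> A"
    and "finite ((\<lambda>x. C #> x) ` A)"
  shows "subgroup_index G A C = subgroup_index G A B * subgroup_index G B C
     \<and> finite ((\<lambda>x. C #> x) ` B)"
  using tower[OF assms] unfolding subgroup_index_def by blast

lemma (in group) idx_conj:
  assumes "h \<in> carrier G" "B \<subseteq> carrier G" "A \<subseteq> carrier G"
  shows "subgroup_index G (conj_set G h A) (conj_set G h B) = subgroup_index G A B"
  using conj_index[OF assms] unfolding subgroup_index_def by blast

lemma (in group) idx_pos: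
  assumes "subgroup A G" "finite ((\<lambda>x. C #> x) ` A)"
  shows "subgroup_index G A C > 0"
proof -
  have "\<one> \<in> A" using assms(1) subgroup.one_closed by blast
  then have "(\<lambda>x. C #> x) ` A \<noteq> {}" by blast
  then show ?thesis using assms(2) unfolding subgroup_index_def by (simp add: card_gt_0_iff)
qed

lemma (in group) cos_conj:
  assumes tg: "topological_group G T" and h: "h \<in> carrier G" and X: "compact_open_subgroup G T X"
  shows "compact_open_subgroup G T (conj_set G h X)"
  using X tg_open_conj[OF tg _ h] tg_compact_conj[OF tg _ h] conj_subgroup[OF h]
  unfolding compact_open_subgroup_def by blast

lemma (in group) cos_Int:
  assumes "compact_open_subgroup G T X" "compact_open_subgroup G T Y"
  shows "subgroup (X \<inter> Y) G \<and> openin T (X \<inter> Y)"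
  using assms subgroups_Inter_pair unfolding compact_open_subgroup_def by blast

lemma (in group) ratio:
  assumes tg: "topological_group G T" and g: "g \<in> carrier G"
    and U: "compact_open_subgroup G T U" and W: "compact_open_subgroup G T W"
  shows "subgroup_index G U (U \<inter> conj_set G (inv g) U) * subgroup_index G W (W \<inter> conj_set G g W)
       = subgroup_index G W (W \<inter> conj_set G (inv g) W) * subgroup_index G U (U \<inter> conj_set G g U)"
proof -
  define gi where "gi = inv g"
  have gi: "gi \<in> carrier G" unfolding gi_def using g by simp
  define Ug where "Ug = conj_set G gi U"
  define Wg where "Wg = conj_set G gi W"
  define E where "E = U \<inter> W"
  define Eg where "Eg = conj_set G gi E"
  define D where "D = E \<inter> Eg"
  have Uc: "U \<subseteq> carrier G" and Wc: "W \<subseteq> carrier G"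
    using U W unfolding compact_open_subgroup_def using subgroup.subset by blast+
  have Ug: "compact_open_subgroup G T Ug" unfolding Ug_def by (rule cos_conj[OF tg gi U])
  have Wg: "compact_open_subgroup G T Wg" unfolding Wg_def by (rule cos_conj[OF tg gi W])
  have Eg_eq: "Eg = Ug \<inter> Wg" unfolding Eg_def E_def Ug_def Wg_def by (rule conj_Int[OF gi Uc Wc])
  have US: "subgroup U G" and WS: "subgroup W G" and UgS: "subgroup Ug G" and WgS: "subgroup Wg G"
    using U W Ug Wg unfolding compact_open_subgroup_def by blast+
  have Ucp: "compactin T U" and Wcp: "compactin T W" and Ugcp: "compactin T Ug" and Wgcp: "compactin T Wg"
    using U W Ug Wg unfolding compact_open_subgroup_def by blast+
  have ES: "subgroup E G" and Eo: "openin T E" unfolding E_def using cos_Int[OF U W] by blast+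
  have EgS: "subgroup Eg G" and Ego: "openin T Eg" unfolding Eg_eq using cos_Int[OF Ug Wg] by blast+
  have DS: "subgroup D G" unfolding D_def using ES EgS subgroups_Inter_pair by blast
  have Do: "openin T D" unfolding D_def using Eo Ego by blast
  have UUS: "subgroup (U \<inter> Ug) G" using cos_Int[OF U Ug] by blast
  have WWS: "subgroup (W \<inter> Wg) G" using cos_Int[OF W Wg] by blast
  have DU: "D \<subseteq> U" and DW: "D \<subseteq> W" and DUg: "D \<subseteq> Ug" and DWg: "D \<subseteq> Wg"
    unfolding D_def E_def Eg_eq by blast+
  have finU: "finite ((\<lambda>x. D #> x) ` U)" by (rule tg_finite_index[OF tg Ucp US Do DS DU])
  have finW: "finite ((\<lambda>x. D #> x) ` W)" by (rule tg_finite_index[OF tg Wcp WS Do DS DW])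
  have finUg: "finite ((\<lambda>x. D #> x) ` Ug)" by (rule tg_finite_index[OF tg Ugcp UgS Do DS DUg])
  have finWg: "finite ((\<lambda>x. D #> x) ` Wg)" by (rule tg_finite_index[OF tg Wgcp WgS Do DS DWg])
  have t1: "subgroup_index G U D = subgroup_index G U E * subgroup_index G E D"
    using idx_tower[OF US ES DS _ _ finU] unfolding D_def E_def by blast
  have t2: "subgroup_index G W D = subgroup_index G W E * subgroup_index G E D"
    using idx_tower[OF WS ES DS _ _ finW] unfolding D_def E_def by blast
  have t3: "subgroup_index G Ug D = subgroup_index G Ug Eg * subgroup_index G Eg D"
    using idx_tower[OF UgS EgS DS _ _ finUg] unfolding D_def Eg_eq by blast
  have t4: "subgroup_index G Wg D = subgroup_index G Wg Eg * subgroup_index G Eg D"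
    using idx_tower[OF WgS EgS DS _ _ finWg] unfolding D_def Eg_eq by blast
  have Ec: "E \<subseteq> carrier G" unfolding E_def using Uc by blast
  have c1: "subgroup_index G Ug Eg = subgroup_index G U E"
    unfolding Ug_def Eg_def by (rule idx_conj[OF gi Ec Uc])
  have c2: "subgroup_index G Wg Eg = subgroup_index G W E"
    unfolding Wg_def Eg_def by (rule idx_conj[OF gi Ec Wc])
  have key: "subgroup_index G U D * subgroup_index G Wg D = subgroup_index G W D * subgroup_index G Ug D"
    unfolding t1 t2 t3 t4 c1 c2 by simp
  define p where "p = subgroup_index G (U \<inter> Ug) D"
  define q where "q = subgroup_index G (W \<inter> Wg) D"
  have DUU: "D \<subseteq> U \<inter> Ug" and DWW: "D \<subseteq> W \<inter> Wg" using DU DUg DW DWg by blast+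
  have t5: "subgroup_index G U D = subgroup_index G U (U \<inter> Ug) * p"
    using idx_tower[OF US UUS DS DUU _ finU] unfolding p_def by blast
  have t6: "subgroup_index G Ug D = subgroup_index G Ug (U \<inter> Ug) * p"
    using idx_tower[OF UgS UUS DS DUU _ finUg] unfolding p_def by blast
  have t7: "subgroup_index G W D = subgroup_index G W (W \<inter> Wg) * q"
    using idx_tower[OF WS WWS DS DWW _ finW] unfolding q_def by blast
  have t8: "subgroup_index G Wg D = subgroup_index G Wg (W \<inter> Wg) * q"
    using idx_tower[OF WgS WWS DS DWW _ finWg] unfolding q_def by blast
  have p0: "p \<noteq> 0" using idx_pos[OF US finU] t5 by auto
  have q0: "q \<noteq> 0" using idx_pos[OF WS finW] t7 by auto
  have bU: "subgroup_index G U (U \<inter> conj_set G g U) = subgroup_index G Ug (U \<inter> Ug)"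
  proof -
    have cgU: "conj_set G g U \<subseteq> carrier G" using conj_subset[OF g Uc] .
    have "conj_set G gi (U \<inter> conj_set G g U) = Ug \<inter> U"
      using conj_Int[OF gi Uc cgU] conj_inv_conj[OF g Uc] unfolding Ug_def gi_def by simp
    then have "subgroup_index G Ug (Ug \<inter> U) = subgroup_index G U (U \<inter> conj_set G g U)"
      using idx_conj[OF gi _ Uc, of "U \<inter> conj_set G g U"] Uc unfolding Ug_def by auto
    then show ?thesis by (simp add: Int_commute)
  qed
  have bW: "subgroup_index G W (W \<inter> conj_set G g W) = subgroup_index G Wg (W \<inter> Wg)"
  proof -
    have cgW: "conj_set G g W \<subseteq> carrier G" using conj_subset[OF g Wc] .
    have "conj_set G gi (W \<inter> conj_set G g W) = Wg \<inter> W"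
      using conj_Int[OF gi Wc cgW] conj_inv_conj[OF g Wc] unfolding Wg_def gi_def by simp
    then have "subgroup_index G Wg (Wg \<inter> W) = subgroup_index G W (W \<inter> conj_set G g W)"
      using idx_conj[OF gi _ Wc, of "W \<inter> conj_set G g W"] Wc unfolding Wg_def by auto
    then show ?thesis by (simp add: Int_commute)
  qed
  have "(subgroup_index G U (U \<inter> Ug) * subgroup_index G Wg (W \<inter> Wg)) * (p * q)
      = (subgroup_index G W (W \<inter> Wg) * subgroup_index G Ug (U \<inter> Ug)) * (p * q)"
    using key unfolding t5 t6 t7 t8 by (simp add: ac_simps)
  then have "subgroup_index G U (U \<inter> Ug) * subgroup_index G Wg (W \<inter> Wg)
      = subgroup_index G W (W \<inter> Wg) * subgroup_index G Ug (U \<inter> Ug)"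
    using p0 q0 by simp
  then show ?thesis unfolding bU bW Ug_def Wg_def gi_def .
qed

theorem corollary4p12:
  fixes G :: "('a, 'b) monoid_scheme" and T :: "'a topology" and g :: 'a and U :: "'a set"
  assumes "tdlc_group G T"
    and "g \<in> carrier G"
    and "compact_open_subgroup G T U"
    and "coprime (subgroup_index G U (U \<inter> conj_set G (inv\<^bsub>G\<^esub> g) U))
                 (subgroup_index G U (U \<inter> conj_set G g U))"
  shows "tidy G T g U \<and>
         scale G T g = subgroup_index G U (U \<inter> conj_set G (inv\<^bsub>G\<^esub> g) U)"
proof -
  have tg: "topological_group G T" using assms(1) unfolding tdlc_group_def by blast
  interpret group G using tg_group[OF tg] .
  define a where "a = (\<lambda>V. subgroup_index G V (V \<inter> conj_set G (inv\<^bsub>G\<^esub> g) V))"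
  define b where "b = (\<lambda>V. subgroup_index G V (V \<inter> conj_set G g V))"
  have cop: "coprime (a U) (b U)" using assms(4) unfolding a_def b_def by simp
  have apos: "a V > 0" if V: "compact_open_subgroup G T V" for V
  proof -
    have VS: "subgroup V G" and Vc: "compactin T V" using V unfolding compact_open_subgroup_def by blast+
    have Vg: "compact_open_subgroup G T (conj_set G (inv\<^bsub>G\<^esub> g) V)"
      using cos_conj[OF tg _ V] assms(2) by simp
    have I: "subgroup (V \<inter> conj_set G (inv\<^bsub>G\<^esub> g) V) G" "openin T (V \<inter> conj_set G (inv\<^bsub>G\<^esub> g) V)"
      using cos_Int[OF V Vg] by blast+
    have "finite ((\<lambda>x. (V \<inter> conj_set G (inv\<^bsub>G\<^esub> g) V) #>\<^bsub>G\<^esub> x) ` V)"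
      by (rule tg_finite_index[OF tg Vc VS I(2) I(1)]) blast
    then show ?thesis unfolding a_def using idx_pos[OF VS] by blast
  qed
  have le: "a U \<le> a V" if V: "compact_open_subgroup G T V" for V
  proof -
    have "a U * b V = a V * b U" using ratio[OF tg assms(2) assms(3) V] unfolding a_def b_def .
    then have "a U dvd a V * b U" by (metis dvd_triv_left)
    then have "a U dvd a V" using coprime_dvd_mult_left_iff[OF cop] by blast
    then show ?thesis using apos[OF V] by (simp add: dvd_imp_le)
  qed
  have sc: "scale G T g = a U"
    unfolding scale_def
  proof (rule Least_equality)
    show "\<exists>V. compact_open_subgroup G T V \<and> a U = subgroup_index G V (V \<inter> conj_set G (inv\<^bsub>G\<^esub> g) V)"
      using assms(3) unfolding a_def by blast
  next
    fix y assume "\<exists>V. compact_open_subgroup G T V \<and> y = subgroup_index G V (V \<inter> conj_set G (inv\<^bsub>G\<^esub> g) V)"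
    then obtain V where V: "compact_open_subgroup G T V" "y = a V" unfolding a_def by blast
    show "a U \<le> y" using le[OF V(1)] V(2) by simp
  qed
  show ?thesis using sc assms(3) unfolding tidy_def a_def by simp
qed

end
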